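(* For $n\ge2$ let $\mathcal{V}_n$ be the arc diagram with $\mathbf{Z}=\{Z_1,\dots,Z_n\}$, $\mathbf{a}=\{a_1,\dots,a_{2n-2}\}$, where $a_1\in Z_1$, $a_{2n-2}\in Z_n$, and $a_{2i},a_{2i+1}\in Z_{i+1}$ for $i=1,\dots,n-2$, with matching $M(a_{2i-1})=M(a_{2i})=i$ for $i=1,\dots,n-1$. Then the differential on the algebra $\mathcal{A}(\mathcal{V}_n)$ is identically zero.
   Context: Strands algebra $\mathcal{A}(n,k)$: the $\mathbb{F}_2$-vector space with basis triples $(S,T,\phi)$, $S,T\subset\{1,\dots,n\}$ of size $k$, $\phi\colon S\to T$ a bijection with $\phi(i)\ge i$; product $(S,T,\phi)(U,V,\psi)=(S,V,\psi\circ\phi)$ if $T=U$ and $\mathrm{inv}(\phi)+\mathrm{inv}(\psi)=\mathrm{inv}(\psi\circ\phi)$, else $0$ (inv = number of pairs $i<j$ with $\phi(i)>\phi(j)$); differential: sum over inversions of the generators obtained by swapping the two images, keeping those with inversion number one less. For an arc diagram $\mathcal{Z}=(\mathbf{Z},\mathbf{a},M)$ with $2k$ points, the extended strands algebra $\mathcal{A}(|Z_1|,\dots,|Z_l|)=\bigoplus\mathcal{A}(|Z_1|,k_1)\otimes\cdots\otimes\mathcal{A}(|Z_l|,k_l)$ ($|Z_j|$ = number of points of $\mathbf{a}$ on $Z_j$; strands stay within segments, differential by the Leibniz rule). For $s\subset\{1,\dots,k\}$ of size $i$: sections $S\subset M^{-1}(s)$ with $M|_S$ bijective onto $s$, $I(s)=\sum_S(S,S,\mathrm{id})$,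 $I=\sum_{|s|=i}I(s)$; for a bijection $\psi\colon S\to T$ ($S,T\subset\{1,\dots,2k\}$) with $\psi(x)>x$, $a_i(S,T,\psi)=\sum_U(S\cup U,T\cup U,\psi\cup\mathrm{id}_U)$ over $U$ disjoint from $S\cup T$ with $|S\cup U|=i$. $\mathcal{A}(\mathcal{Z},i)$ is the subalgebra of $\mathcal{A}(|Z_1|,\dots,|Z_l|)$ generated by the $I(s)$ and all $I\,a_i(S,T,\psi)\,I$, and $\mathcal{A}(\mathcal{Z})=\bigoplus_{i=0}^k\mathcal{A}(\mathcal{Z},i)$. *)

theory Defs
  imports Main
begin

text \<open>
  Points of an arc diagram with N points are numbered 1..N in the
  order a_1, ..., a_N; segments are consecutive blocks; seg p is the index of
  the segment containing point p; M p is the arc (1..k) containing point p.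

  A strands generator (S,T,phi) is represented by the graph of phi, a finite set
  of pairs (x, phi x); S = fst ` g, T = snd ` g.  An element of an
  F_2-vector space with a basis of generators is a finite set of generators
  (the set of basis elements with coefficient 1); addition is symmetric
  difference.
\<close>

type_synonym gen = "(nat \<times> nat) set"
type_synonym elt = "gen set"

definition sumF :: "('i \<Rightarrow> 'a set) \<Rightarrow> 'i set \<Rightarrow> 'a set" where
  "sumF f A = {c. odd (card {a\<in>A. c \<in> f a})}"

definition plusE :: "elt \<Rightarrow> elt \<Rightarrow> elt" where
  "plusE x y = (x - y) \<union> (y - x)"

definition partial_bij :: "nat \<Rightarrow> gen \<Rightarrow> bool" where
  "partial_bij N g \<longleftrightarrow> g \<subseteq> {1..N} \<times> {1..N}
     \<and> (\<forall>a b b'. (a,b) \<in> g \<longrightarrow> (a,b') \<in> g \<longrightarrow> b = b')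
     \<and> (\<forall>a a' b. (a,b) \<in> g \<longrightarrow> (a',b) \<in> g \<longrightarrow> a = a')"

definition is_gen :: "nat \<Rightarrow> (nat \<Rightarrow> nat) \<Rightarrow> gen \<Rightarrow> bool" where
  "is_gen N seg g \<longleftrightarrow> partial_bij N g \<and> (\<forall>(a,b)\<in>g. a \<le> b \<and> seg a = seg b)"

definition inv :: "gen \<Rightarrow> nat" where
  "inv g = card {(p,q). p \<in> g \<and> q \<in> g \<and> fst p < fst q \<and> snd p > snd q}"

definition mult_gen :: "gen \<Rightarrow> gen \<Rightarrow> elt" where
  "mult_gen g h = (if snd ` g = fst ` h \<and> inv g + inv h = inv (g O h)
                   then {g O h} else {})"

definition timesE :: "elt \<Rightarrow> elt \<Rightarrow> elt" where
  "timesE x y = sumF (\<lambda>(g,h). mult_gen g h) (x \<times> y)"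

definition swap :: "gen \<Rightarrow> nat \<times> nat \<Rightarrow> nat \<times> nat \<Rightarrow> gen" where
  "swap g p q = (g - {p,q}) \<union> {(fst p, snd q), (fst q, snd p)}"

definition dgen :: "gen \<Rightarrow> elt" where
  "dgen g = sumF (\<lambda>(p,q). if inv (swap g p q) + 1 = inv g then {swap g p q} else {})
              {(p,q). p \<in> g \<and> q \<in> g \<and> fst p < fst q \<and> snd p > snd q}"

definition diff :: "elt \<Rightarrow> elt" where
  "diff x = sumF dgen x"

definition Iset :: "nat \<Rightarrow> (nat \<Rightarrow> nat) \<Rightarrow> nat set \<Rightarrow> elt" where
  "Iset N M s = sumF (\<lambda>S. {Id_on S}) {S. S \<subseteq> {1..N} \<and> bij_betw M S s}"

definition Iall :: "nat \<Rightarrow> nat \<Rightarrow> (nat \<Rightarrow> nat) \<Rightarrow> nat \<Rightarrow> elt" where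
  "Iall N k M i = sumF (Iset N M) {s. s \<subseteq> {1..k} \<and> card s = i}"

definition a_elt :: "nat \<Rightarrow> nat \<Rightarrow> gen \<Rightarrow> elt" where
  "a_elt N i g = sumF (\<lambda>U. {g \<union> Id_on U})
      {U. U \<subseteq> {1..N} \<and> U \<inter> (fst ` g \<union> snd ` g) = {} \<and> card (fst ` g \<union> U) = i}"

text \<open>Admissible psi for a_i: bijection S -> T with psi x > x, strands within
  segments (so that a_i(S,T,psi) lies in the extended strands algebra).\<close>
definition a_ok :: "nat \<Rightarrow> (nat \<Rightarrow> nat) \<Rightarrow> gen \<Rightarrow> bool" where
  "a_ok N seg g \<longleftrightarrow> partial_bij N g \<and> (\<forall>(a,b)\<in>g. a < b \<and> seg a = seg b)"

definition gens_Zi :: "nat \<Rightarrow> nat \<Rightarrow> (nat \<Rightarrow> nat) \<Rightarrow> (nat \<Rightarrow> nat) \<Rightarrow> nat \<Rightarrow> elt set" where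
  "gens_Zi N k seg M i =
     {Iset N M s | s. s \<subseteq> {1..k} \<and> card s = i}
     \<union> {timesE (Iall N k M i) (timesE (a_elt N i g) (Iall N k M i)) | g. a_ok N seg g}"

inductive_set alg_Zi :: "nat \<Rightarrow> nat \<Rightarrow> (nat \<Rightarrow> nat) \<Rightarrow> (nat \<Rightarrow> nat) \<Rightarrow> nat \<Rightarrow> elt set"
  for N k seg M i where
  zero: "{} \<in> alg_Zi N k seg M i"
| gen: "x \<in> gens_Zi N k seg M i \<Longrightarrow> x \<in> alg_Zi N k seg M i"
| plus: "x \<in> alg_Zi N k seg M i \<Longrightarrow> y \<in> alg_Zi N k seg M i \<Longrightarrow> plusE x y \<in> alg_Zi N k seg M i"
| times: "x \<in> alg_Zi N k seg M i \<Longrightarrow> y \<in> alg_Zi N k seg M i \<Longrightarrow> timesE x y \<in> alg_Zi N k seg M i"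

text \<open>A(Z) = direct sum of the A(Z,i), i = 0..k (all finite sums of their elements).\<close>
inductive_set alg_Z :: "nat \<Rightarrow> nat \<Rightarrow> (nat \<Rightarrow> nat) \<Rightarrow> (nat \<Rightarrow> nat) \<Rightarrow> elt set"
  for N k seg M where
  zero: "{} \<in> alg_Z N k seg M"
| comp: "i \<le> k \<Longrightarrow> x \<in> alg_Zi N k seg M i \<Longrightarrow> x \<in> alg_Z N k seg M"
| plus: "x \<in> alg_Z N k seg M \<Longrightarrow> y \<in> alg_Z N k seg M \<Longrightarrow> plusE x y \<in> alg_Z N k seg M"

text \<open>The arc diagram V_n: 2n-2 points, n segments, n-1 arcs.
  a_1 in Z_1, a_{2i}, a_{2i+1} in Z_{i+1} (1 \<le> i \<le> n-2), a_{2n-2} in Z_n;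
  M(a_{2i-1}) = M(a_{2i}) = i.\<close>
definition V_seg :: "nat \<Rightarrow> nat" where
  "V_seg p = p div 2 + 1"

definition V_match :: "nat \<Rightarrow> nat" where
  "V_match p = (p + 1) div 2"

end

theory Submission
  imports Defs
begin

definition goodg :: "gen \<Rightarrow> bool" where
  "goodg g \<longleftrightarrow> (\<forall>(a,b)\<in>g. b = a \<or> (b = Suc a \<and> even a))"

definition goode :: "elt \<Rightarrow> bool" where
  "goode x \<longleftrightarrow> (\<forall>g\<in>x. goodg g)"

lemma sumF_mem: "c \<in> sumF f A \<Longrightarrow> \<exists>a\<in>A. c \<in> f a"
proof -
  assume "c \<in> sumF f A"
  hence "odd (card {a\<in>A. c \<in> f a})" by (simp add: sumF_def)
  hence "{a\<in>A. c \<in> f a} \<noteq> {}" by (metis card.empty even_zero)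
  thus ?thesis by blast
qed

lemma sumF_good: "(\<And>a. a \<in> A \<Longrightarrow> goode (f a)) \<Longrightarrow> goode (sumF f A)"
  unfolding goode_def using sumF_mem by metis

lemma plus_good: "goode x \<Longrightarrow> goode y \<Longrightarrow> goode (plusE x y)"
  unfolding goode_def plusE_def by blast

lemma comp_good: "goodg g \<Longrightarrow> goodg h \<Longrightarrow> goodg (g O h)"
  unfolding goodg_def by fastforce

lemma times_good: "goode x \<Longrightarrow> goode y \<Longrightarrow> goode (timesE x y)"
  unfolding timesE_def
  apply (rule sumF_good)
  apply (auto simp: mult_gen_def goode_def split: if_splits)
  apply (metis comp_good)
  done

lemma Iset_good: "goode (Iset N M s)"
  unfolding Iset_def by (rule sumF_good) (auto simp: goode_def goodg_def)

lemma Iall_good: "goode (Iall N k M i)"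
  unfolding Iall_def by (rule sumF_good) (rule Iset_good)

lemma a_elt_good:
  assumes "a_ok N V_seg g" shows "goode (a_elt N i g)"
proof -
  have k: "b = Suc a \<and> even a" if "a < b" "a div 2 = b div 2" for a b :: nat
  proof -
    have "a = 2*(a div 2) + a mod 2" "b = 2*(b div 2) + b mod 2" by simp_all
    moreover have "a mod 2 < 2" "b mod 2 < 2" by simp_all
    ultimately have "a mod 2 = 0" "b mod 2 = 1" "b = Suc a" using that by linarith+
    thus ?thesis by auto
  qed
  have "goodg g"
    unfolding goodg_def
  proof (intro ballI)
    fix p assume p: "p \<in> g"
    obtain a b where ab: "p = (a,b)" by (cases p)
    have "(a,b) \<in> g" using p ab by simp
    hence "a < b \<and> V_seg a = V_seg b" using assms unfolding a_ok_def by blast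
    hence "a < b" "V_seg a = V_seg b" by auto
    hence "b = Suc a \<and> even a" using k[of a b] unfolding V_seg_def by simp
    thus "case p of (a,b) \<Rightarrow> b = a \<or> b = Suc a \<and> even a" using ab by simp
  qed
  hence "goodg (g \<union> Id_on U)" for U unfolding goodg_def by (auto simp: Id_on_def)
  hence "goode {g \<union> Id_on U}" for U unfolding goode_def by simp
  thus ?thesis unfolding a_elt_def
    by (rule sumF_good)
qed

lemma gens_good: "x \<in> gens_Zi N k V_seg M i \<Longrightarrow> goode x"
  unfolding gens_Zi_def
proof (elim UnE)
  assume "x \<in> {Iset N M s |s. s \<subseteq> {1..k} \<and> card s = i}"
  thus ?thesis using Iset_good by blast
next
  assume "x \<in> {timesE (Iall N k M i) (timesE (a_elt N i g) (Iall N k M i)) |g. a_ok N V_seg g}"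
  then obtain g where "a_ok N V_seg g" and x: "x = timesE (Iall N k M i) (timesE (a_elt N i g) (Iall N k M i))"
    by blast
  hence "goode (a_elt N i g)" by (intro a_elt_good)
  thus ?thesis unfolding x by (intro times_good Iall_good)
qed

lemma algZi_good: "x \<in> alg_Zi N k V_seg M i \<Longrightarrow> goode x"
proof (induction rule: alg_Zi.induct)
  case zero thus ?case by (simp add: goode_def)
next
  case (gen x) thus ?case by (intro gens_good) simp
next
  case (plus x y) thus ?case by (intro plus_good) simp_all
next
  case (times x y) thus ?case by (intro times_good) simp_all
qed

lemma algZ_good: "x \<in> alg_Z N k V_seg M \<Longrightarrow> goode x"
proof (induction rule: alg_Z.induct)
  case zero thus ?case by (simp add: goode_def)
next
  case (comp i x) thus ?case by (intro algZi_good) simp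
next
  case (plus x y) thus ?case by (intro plus_good) simp_all
qed

lemma sumF_empty: assumes "\<And>a. a \<in> A \<Longrightarrow> f a = {}" shows "sumF f A = {}"
proof -
  have "\<And>c. {a\<in>A. c \<in> f a} = {}" using assms by auto
  thus ?thesis unfolding sumF_def by (simp only: card.empty) simp
qed

lemma noinv: assumes "goodg g" "(a,b) \<in> g" "(c,d) \<in> g" "a < c" "d < b" shows False
proof -
  have "b = a \<or> b = Suc a" using assms(1,2) unfolding goodg_def by blast
  moreover have "d = c \<or> d = Suc c" using assms(1,3) unfolding goodg_def by blast
  ultimately show False using assms(4,5) by linarith
qed

lemma dgen_good: "goodg g \<Longrightarrow> dgen g = {}"
proof -
  assume g: "goodg g"
  have E: "{(p,q). p \<in> g \<and> q \<in> g \<and> fst p < fst q \<and> snd p > snd q} = {}"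
  proof (rule ccontr)
    assume "{(p,q). p \<in> g \<and> q \<in> g \<and> fst p < fst q \<and> snd p > snd q} \<noteq> {}"
    then obtain p q where "p \<in> g" "q \<in> g" "fst p < fst q" "snd p > snd q" by blast
    thus False using noinv[OF g, of "fst p" "snd p" "fst q" "snd q"] by simp
  qed
  show ?thesis unfolding dgen_def E by (intro sumF_empty) simp
qed

theorem mainTheorem4:
  fixes n :: nat
  assumes "n \<ge> 2"
  shows "\<forall>x \<in> alg_Z (2*n - 2) (n - 1) V_seg V_match. diff x = {}"
proof
  fix x assume "x \<in> alg_Z (2*n - 2) (n - 1) V_seg V_match"
  hence "goode x" by (rule algZ_good)
  hence "\<forall>a\<in>x. dgen a = {}" by (simp add: goode_def dgen_good)
  thus "diff x = {}" unfolding diff_def by (intro sumF_empty) simp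
qed

end
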